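(* Fix a single machine with nonnegative real parameters $k^A,k^B,t^A,t^B$, a real bound $L$ and nonnegative integers $n_a,n_b$. For $0\le a\le n_a$, $0\le b\le n_b$ let $F(a,b)=1$ if $f(a,b)\le L$ and $F(a,b)=0$ otherwise, where $f$ is as in the context. Then, whenever all entries of $F$ mentioned below lie in the range $0\le a\le n_a$, $0\le b\le n_b$: (1) if $b\le a+1$ and $F(a,b)=0$, then $F(a+1,b)=0$; (2) if $b\ge a+1$ and $F(a,b)=0$, then $F(a,b+1)=0$; (3) if $F(a,a+1)=0$, then $F(a+1,a+2)=0$; (4) if $F(a+1,a+1)=0$ and $F(a+1,a+2)=1$, then $F(a,a+1)=1$.
   Context: A machine processes jobs of two types, A and B, in batches. A schedule for the task-combination $(a,b)$ is a finite sequence of batches, each a nonempty group of jobs of a single type, with consecutive batches of different types, processing exactly $a$ A-jobs and $b$ B-jobs in total. An A-batch of $x$ jobs takes $t^A+k^A x^2$ time units, a B-batch of $x$ jobs takes $t^B+k^B x^2$ time units; the time of a schedule is the sum of its batch times (empty schedule: time $0$). $f(a,b)$ is the minimum time over all schedules for $(a,b)$. *)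

theory Defs
  imports Main "HOL.Real"
begin

datatype jtype = JA | JB

text \<open>A batch is a pair (type, number of jobs); a schedule is a list of batches.\<close>
type_synonym batch = "jtype \<times> nat"

definition valid_schedule :: "batch list \<Rightarrow> nat \<Rightarrow> nat \<Rightarrow> bool" where
  "valid_schedule s a b \<longleftrightarrow>
     (\<forall>x \<in> set s. snd x > 0) \<and>
     (\<forall>i. Suc i < length s \<longrightarrow> fst (s ! i) \<noteq> fst (s ! Suc i)) \<and>
     sum_list (map snd (filter (\<lambda>x. fst x = JA) s)) = a \<and>
     sum_list (map snd (filter (\<lambda>x. fst x = JB) s)) = b"

definition batch_time :: "real \<Rightarrow> real \<Rightarrow> real \<Rightarrow> real \<Rightarrow> batch \<Rightarrow> real" where
  "batch_time kA kB tA tB x =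
     (case fst x of JA \<Rightarrow> tA + kA * (real (snd x))^2
                  | JB \<Rightarrow> tB + kB * (real (snd x))^2)"

definition sched_time :: "real \<Rightarrow> real \<Rightarrow> real \<Rightarrow> real \<Rightarrow> batch list \<Rightarrow> real" where
  "sched_time kA kB tA tB s = sum_list (map (batch_time kA kB tA tB) s)"

definition fmin :: "real \<Rightarrow> real \<Rightarrow> real \<Rightarrow> real \<Rightarrow> nat \<Rightarrow> nat \<Rightarrow> real" where
  "fmin kA kB tA tB a b = Min {sched_time kA kB tA tB s | s. valid_schedule s a b}"

definition Fval :: "real \<Rightarrow> real \<Rightarrow> real \<Rightarrow> real \<Rightarrow> real \<Rightarrow> nat \<Rightarrow> nat \<Rightarrow> nat" where
  "Fval kA kB tA tB L a b = (if fmin kA kB tA tB a b \<le> L then 1 else 0)"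

end

theory Submission
  imports Defs
begin

lemma succ_nth:
  "(\<forall>i. Suc i < length s \<longrightarrow> P (s ! i) (s ! Suc i)) \<longleftrightarrow> successively P s"
proof (induction P s rule: successively.induct)
  case (3 P x y xs)
  have "(\<forall>i. Suc i < length (x # y # xs) \<longrightarrow> P ((x # y # xs) ! i) ((x # y # xs) ! Suc i))
    \<longleftrightarrow> P x y \<and> (\<forall>i. Suc i < length (y # xs) \<longrightarrow> P ((y # xs) ! i) ((y # xs) ! Suc i))"
    (is "?L \<longleftrightarrow> ?R")
  proof
    assume ?L
    then show ?R
      by (metis Suc_less_eq length_Cons nth_Cons_0 nth_Cons_Suc zero_less_Suc)
  next
    assume r: ?R
    show ?L
    proof (intro allI impI)
      fix i assume "Suc i < length (x # y # xs)"
      then show "P ((x # y # xs) ! i) ((x # y # xs) ! Suc i)"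
        using r by (cases i) auto
    qed
  qed
  then show ?case using 3 by simp
qed auto

definition cnt :: "jtype \<Rightarrow> batch list \<Rightarrow> nat" where
  "cnt T s = sum_list (map snd (filter (\<lambda>x. fst x = T) s))"

definition nbt :: "jtype \<Rightarrow> batch list \<Rightarrow> nat" where
  "nbt T s = length (filter (\<lambda>x. fst x = T) s)"

definition vs :: "jtype \<Rightarrow> jtype \<Rightarrow> batch list \<Rightarrow> nat \<Rightarrow> nat \<Rightarrow> bool" where
  "vs T U s n m \<longleftrightarrow> (\<forall>x \<in> set s. snd x > 0) \<and> successively (\<lambda>x y. fst x \<noteq> fst y) s
     \<and> cnt T s = n \<and> cnt U s = m"

lemma jtype_cases: "(x::jtype) = JA \<or> x = JB"
  by (cases x) auto

lemma alt_count:
  assumes "T \<noteq> U" "\<forall>x. (x::jtype) = T \<or> x = U"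
    "successively (\<lambda>x y. fst x \<noteq> fst y) s" "s \<noteq> []"
  shows "2 * (int (nbt U s) - int (nbt T s)) =
     (if fst (hd s) = U then 1 else -1) + (if fst (last s) = U then 1 else -1)"
  using assms(3,4)
proof (induction s)
  case (Cons x xs)
  show ?case
  proof (cases "xs = []")
    case True
    then show ?thesis using assms(1,2) by (auto simp: nbt_def)
  next
    case False
    have "fst x \<noteq> fst (hd xs)" "successively (\<lambda>x y. fst x \<noteq> fst y) xs"
      using Cons.prems False by (auto simp: successively_Cons)
    with Cons.IH False have ih: "2 * (int (nbt U xs) - int (nbt T xs)) =
     (if fst (hd xs) = U then 1 else -1) + (if fst (last xs) = U then 1 else -1)" by simp
    have lx: "last (x#xs) = last xs" "hd (x#xs) = x" using False by auto
    show ?thesis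
    proof (cases "fst x = U")
      case c1: True
      then have c2: "fst (hd xs) = T" using \<open>fst x \<noteq> fst (hd xs)\<close> assms(2) by metis
      have n1: "nbt U (x#xs) = Suc (nbt U xs)" by (simp add: nbt_def c1)
      have n2: "nbt T (x#xs) = nbt T xs" using assms(1) by (simp add: nbt_def c1)
      have ih': "2 * (int (nbt U xs) - int (nbt T xs)) = -1 + (if fst (last xs) = U then 1 else -1)"
        using ih c2 assms(1) by simp
      show ?thesis using ih' n1 n2 lx c1 by simp
    next
      case c1: False
      then have c0: "fst x = T" using assms(2) by metis
      then have c2: "fst (hd xs) = U" using \<open>fst x \<noteq> fst (hd xs)\<close> assms(2) by metis
      have n1: "nbt U (x#xs) = nbt U xs" using c1 by (simp add: nbt_def)
      have n2: "nbt T (x#xs) = Suc (nbt T xs)" by (simp add: nbt_def c0)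
      have ih': "2 * (int (nbt U xs) - int (nbt T xs)) = 1 + (if fst (last xs) = U then 1 else -1)"
        using ih c2 by simp
      show ?thesis using ih' n1 n2 lx c1 by simp
    qed
  qed
qed simp

lemma cnt_one: "(\<forall>x\<in>set s. fst x = T \<longrightarrow> snd x = 1) \<Longrightarrow> cnt T s = nbt T s"
  by (induction s) (auto simp: cnt_def nbt_def)

lemma cnt_ge: "(\<forall>x\<in>set s. snd x > 0) \<Longrightarrow> cnt U s \<ge> nbt U s"
  by (induction s) (auto simp: cnt_def nbt_def)

lemma bt_nonneg:
  assumes "kA \<ge> 0" "kB \<ge> 0" "tA \<ge> 0" "tB \<ge> 0"
  shows "batch_time kA kB tA tB x \<ge> 0"
  using assms by (auto simp: batch_time_def split: jtype.splits)

lemma bt_mono: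
  assumes "kA \<ge> 0" "kB \<ge> 0" "k' \<le> k"
  shows "batch_time kA kB tA tB (T, k') \<le> batch_time kA kB tA tB (T, k)"
proof -
  have "(real k')^2 \<le> (real k)^2" using assms(3) by (simp add: power_mono)
  then show ?thesis using assms
    by (auto simp: batch_time_def mult_left_mono split: jtype.splits)
qed

lemma key:
  assumes nn: "kA \<ge> 0" "kB \<ge> 0" "tA \<ge> 0" "tB \<ge> 0"
    and TU: "T \<noteq> U" "\<forall>x. (x::jtype) = T \<or> x = U"
    and v: "vs T U s (Suc n) m" and mle: "m \<le> Suc n"
  shows "\<exists>s'. vs T U s' n m \<and> sched_time kA kB tA tB s' \<le> sched_time kA kB tA tB s"
proof -
  let ?bt = "batch_time kA kB tA tB"
  have pos: "\<forall>x \<in> set s. snd x > 0" and alt: "successively (\<lambda>x y. fst x \<noteq> fst y) s"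
    and cT: "cnt T s = Suc n" and cU: "cnt U s = m" using v by (auto simp: vs_def)
  show ?thesis
  proof (cases "\<exists>x\<in>set s. fst x = T \<and> snd x \<ge> 2")
    case True
    then obtain x where x: "x \<in> set s" "fst x = T" "snd x \<ge> 2" by blast
    obtain xs ys where s: "s = xs @ x # ys" using split_list[OF x(1)] by blast
    define x' where "x' = (T, snd x - 1)"
    define s' where "s' = xs @ x' # ys"
    have "vs T U s' n m"
      using pos alt cT cU x TU(1) unfolding vs_def s s'_def x'_def
      by (auto simp: successively_append_iff successively_Cons cnt_def)
    moreover have "sched_time kA kB tA tB s' \<le> sched_time kA kB tA tB s"
    proof -
      have "?bt x' \<le> ?bt x" using bt_mono[OF nn(1,2), of "snd x - 1" "snd x" tA tB T] x
        by (simp add: x'_def prod_eq_iff) (metis prod.collapse)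
      then show ?thesis by (simp add: sched_time_def s s'_def)
    qed
    ultimately show ?thesis by blast
  next
    case False
    have one: "\<forall>x\<in>set s. fst x = T \<longrightarrow> snd x = 1"
    proof (intro ballI impI)
      fix x assume "x \<in> set s" "fst x = T"
      then have "snd x > 0" "\<not> snd x \<ge> 2" using pos False by auto
      then show "snd x = 1" by linarith
    qed
    have ne: "s \<noteq> []" using cT by (auto simp: cnt_def)
    show ?thesis
    proof (cases "fst (hd s) = T")
      case True
      obtain x r where s: "s = x # r" using ne by (cases s) auto
      have "vs T U r n m" using v True one TU(1) unfolding vs_def s
        by (auto simp: successively_Cons cnt_def)
      moreover have "sched_time kA kB tA tB r \<le> sched_time kA kB tA tB s"
        using bt_nonneg[OF nn, of x] by (simp add: sched_time_def s)
      ultimately show ?thesis by blast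
    next
      case hdU: False
      show ?thesis
      proof (cases "fst (last s) = T")
        case True
        obtain x r where s: "s = r @ [x]" using ne by (cases s rule: rev_cases) auto
        have "vs T U r n m" using v True one TU(1) unfolding vs_def s
          by (auto simp: successively_append_iff cnt_def)
        moreover have "sched_time kA kB tA tB r \<le> sched_time kA kB tA tB s"
          using bt_nonneg[OF nn, of x] by (simp add: sched_time_def s)
        ultimately show ?thesis by blast
      next
        case False
        have "fst (hd s) = U" "fst (last s) = U" using hdU False TU(2) by metis+
        then have "nbt U s = nbt T s + 1"
          using alt_count[OF TU alt ne] by simp
        moreover have "cnt T s = nbt T s" using cnt_one[OF one] .
        moreover have "cnt U s \<ge> nbt U s" using cnt_ge[OF pos] .
        ultimately have False using cT cU mle by simp
        then show ?thesis ..
      qed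
    qed
  qed
qed

lemma valid_vs: "valid_schedule s a b \<longleftrightarrow> vs JA JB s a b"
  unfolding valid_schedule_def vs_def cnt_def succ_nth[symmetric] by blast

lemma valid_vs2: "valid_schedule s a b \<longleftrightarrow> vs JB JA s b a"
  unfolding valid_schedule_def vs_def cnt_def succ_nth[symmetric] by blast

lemma finite_sched: "finite {sched_time kA kB tA tB s | s. valid_schedule s a b}"
proof -
  have fu: "finite (UNIV :: jtype set)"
  proof -
    have "(UNIV :: jtype set) = {JA, JB}" using jtype_cases by auto
    then show ?thesis by (metis finite.emptyI finite_insert)
  qed
  have len: "length s \<le> a + b" if "valid_schedule s a b" for s
  proof -
    have pos: "\<forall>x\<in>set s. snd x > 0" using that by (simp add: valid_schedule_def)
    have "length s = nbt JA s + nbt JB s"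
    proof -
      have "\<forall>x\<in>set s. fst x = JA \<or> fst x = JB" using jtype_cases by blast
      then show ?thesis unfolding nbt_def by (induction s) auto
    qed
    moreover have "cnt JA s \<ge> nbt JA s" "cnt JB s \<ge> nbt JB s" using cnt_ge[OF pos] by auto
    moreover have "cnt JA s = a" "cnt JB s = b" using that by (auto simp: valid_schedule_def cnt_def)
    ultimately show ?thesis by simp
  qed
  have sub: "\<forall>x\<in>set s. snd x \<le> a + b" if "valid_schedule s a b" for s
  proof
    fix x assume x: "x \<in> set s"
    have "snd x \<le> cnt (fst x) s" using x unfolding cnt_def
      by (induction s) auto
    moreover have "cnt (fst x) s \<le> a + b" using that jtype_cases[of "fst x"]
      by (auto simp: valid_schedule_def cnt_def)
    ultimately show "snd x \<le> a + b" by simp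
  qed
  have "{s. valid_schedule s a b} \<subseteq> {xs::batch list. set xs \<subseteq> UNIV \<times> {..a+b} \<and> length xs \<le> a + b}"
    using len sub by fastforce
  moreover have "finite {xs::batch list. set xs \<subseteq> UNIV \<times> {..a+b} \<and> length xs \<le> a + b}"
    by (intro finite_lists_length_le finite_cartesian_product fu finite_atMost)
  ultimately have "finite {s. valid_schedule s a b}" by (rule finite_subset)
  then have "finite ((sched_time kA kB tA tB) ` {s. valid_schedule s a b})" by simp
  moreover have "{sched_time kA kB tA tB s | s. valid_schedule s a b} =
     (sched_time kA kB tA tB) ` {s. valid_schedule s a b}" by auto
  ultimately show ?thesis by simp
qed

lemma exists_sched: "\<exists>s. valid_schedule s a b"
proof -
  let ?s = "filter (\<lambda>x. snd x > 0) [(JA, a), (JB, b)]"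
  have "valid_schedule ?s a b"
    unfolding valid_schedule_def
    by (auto simp: nth_Cons split: nat.splits)
  then show ?thesis by blast
qed

lemma fmin_le: "valid_schedule s a b \<Longrightarrow> fmin kA kB tA tB a b \<le> sched_time kA kB tA tB s"
  unfolding fmin_def by (rule Min_le[OF finite_sched]) blast

lemma fmin_ex: "\<exists>s. valid_schedule s a b \<and> fmin kA kB tA tB a b = sched_time kA kB tA tB s"
proof -
  have "fmin kA kB tA tB a b \<in> {sched_time kA kB tA tB s | s. valid_schedule s a b}"
    unfolding fmin_def using finite_sched exists_sched by (intro Min_in) auto
  then show ?thesis by blast
qed

lemma monoA:
  assumes "kA \<ge> 0" "kB \<ge> 0" "tA \<ge> 0" "tB \<ge> 0" "b \<le> a + 1"
  shows "fmin kA kB tA tB a b \<le> fmin kA kB tA tB (a + 1) b"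
proof -
  obtain s where s: "valid_schedule s (Suc a) b" "fmin kA kB tA tB (a+1) b = sched_time kA kB tA tB s"
    using fmin_ex[where a="Suc a" and b=b and kA=kA and kB=kB and tA=tA and tB=tB] by auto
  obtain s' where "vs JA JB s' a b" "sched_time kA kB tA tB s' \<le> sched_time kA kB tA tB s"
    using key[OF assms(1-4), of JA JB s a b] s(1) assms(5) jtype_cases by (auto simp: valid_vs)
  then show ?thesis using fmin_le[where s=s' and a=a and b=b and kA=kA and kB=kB and tA=tA and tB=tB] s(2) by (simp add: valid_vs)
qed

lemma monoB:
  assumes "kA \<ge> 0" "kB \<ge> 0" "tA \<ge> 0" "tB \<ge> 0" "a \<le> b + 1"
  shows "fmin kA kB tA tB a b \<le> fmin kA kB tA tB a (b + 1)"
proof -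
  obtain s where s: "valid_schedule s a (Suc b)" "fmin kA kB tA tB a (b+1) = sched_time kA kB tA tB s"
    using fmin_ex[where a=a and b="Suc b" and kA=kA and kB=kB and tA=tA and tB=tB] by auto
  obtain s' where "vs JB JA s' b a" "sched_time kA kB tA tB s' \<le> sched_time kA kB tA tB s"
    using key[OF assms(1-4), of JB JA s b a] s(1) assms(5) jtype_cases by (auto simp: valid_vs2)
  then show ?thesis using fmin_le[where s=s' and a=a and b=b and kA=kA and kB=kB and tA=tA and tB=tB] s(2) by (simp add: valid_vs2)
qed

theorem lemma4:
  fixes kA kB tA tB L :: real and na nb :: nat
  assumes "kA \<ge> 0" and "kB \<ge> 0" and "tA \<ge> 0" and "tB \<ge> 0"
  defines "F \<equiv> Fval kA kB tA tB L"
  shows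
    "(\<forall>a b. a + 1 \<le> na \<and> b \<le> nb \<and> b \<le> a + 1 \<and> F a b = 0 \<longrightarrow> F (a + 1) b = 0)
   \<and> (\<forall>a b. a \<le> na \<and> b + 1 \<le> nb \<and> b \<ge> a + 1 \<and> F a b = 0 \<longrightarrow> F a (b + 1) = 0)
   \<and> (\<forall>a. a + 1 \<le> na \<and> a + 2 \<le> nb \<and> F a (a + 1) = 0 \<longrightarrow> F (a + 1) (a + 2) = 0)
   \<and> (\<forall>a. a + 1 \<le> na \<and> a + 2 \<le> nb \<and> F (a + 1) (a + 1) = 0 \<and> F (a + 1) (a + 2) = 1
        \<longrightarrow> F a (a + 1) = 1)"
proof -
  note A = monoA[OF assms(1-4)] and B = monoB[OF assms(1-4)]
  have 1: "F a b = 0 \<Longrightarrow> F (a + 1) b = 0" if "b \<le> a + 1" for a b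
    using A[OF that] unfolding F_def Fval_def by (auto split: if_splits)
  have 2: "F a b = 0 \<Longrightarrow> F a (b + 1) = 0" if "a \<le> b + 1" for a b
    using B[OF that] unfolding F_def Fval_def by (auto split: if_splits)
  have 3: "F a (a + 1) = 0 \<Longrightarrow> F (a + 1) (a + 2) = 0" for a
    using 1[of "a+1" a] 2[of "a+1" "a+1"] by (simp add: numeral_2_eq_2)
  show ?thesis
  proof (intro conjI allI impI)
    fix a assume h: "a + 1 \<le> na \<and> a + 2 \<le> nb \<and> F (a + 1) (a + 1) = 0 \<and> F (a + 1) (a + 2) = 1"
    have "F (a+1) (a+1+1) = 0" using 2[of "a+1" "a+1"] h by simp
    then show "F a (a + 1) = 1" using h by (simp add: numeral_2_eq_2)
  qed (use 1 2 3 in auto)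
qed

end
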